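(* Let $X_1,\ldots,X_N$ be independent random vectors in $\mathbb R^n$ and let $\psi>0$ be such that $\sup_{i\le N}\sup_{y\in S^{n-1}}\|\langle X_i,y\rangle\|_{\psi_1}\le\psi$. Let $m\le N$, $\varepsilon,\alpha\in(0,1]$ and $L\ge 2m\log\frac{12eN}{m\varepsilon}$. Then $$\mathbb P\Big(\sup_{F\subset\{1,\ldots,N\},\,|F|\le m}\ \sup_{E\subset F}\ \sup_{z\in\mathcal N(F,\varepsilon,\alpha)}\ \sum_{i\in E}\Big|\Big\langle z_iX_i,\sum_{j\in F\setminus E}z_jX_j\Big\rangle\Big|>\psi\,\alpha LA_m\Big)\le e^{-L/2}.$$
   Context: For a random variable $Y$, $\|Y\|_{\psi_1}=\inf\{C>0:\mathbb E\exp(|Y|/C)\le 2\}$. $A$ denotes the random $n\times N$ matrix whose columns are $X_1,\ldots,X_N$, and for $1\le m\le N$, $A_m=\sup\{|Az|: z\in S^{N-1},\ |\mathrm{supp}\,z|\le m\}$ (Euclidean norms). For $E\subset\{1,\ldots,N\}$, $\mathbb R^E$ is the set of vectors in $\mathbb R^N$ supported in $E$. For $\varepsilon,\alpha\in(0,1]$, $\mathcal N(E,\varepsilon,\alpha)$ denotes a fixed $\varepsilon$-net (in the Euclidean metric) of $B_2^N\cap\alpha B_\infty^N\cap\mathbb R^E$ of cardinality at most $(3/\varepsilon)^{|E|}$; $z_i$ denotes the $i$-th coordinate of $z$. $\log$ is the natural logarithm. *)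

theory Defs
  imports "HOL-Probability.Probability"
begin

text \<open>psi_1 (Orlicz) norm; the infimum of the empty set is \<infinity>.\<close>
definition psi1_norm :: "'a measure \<Rightarrow> ('a \<Rightarrow> real) \<Rightarrow> ereal" where
  "psi1_norm M Y = Inf {ereal C | C. C > 0 \<and>
      (\<integral>\<^sup>+ x. ennreal (exp (\<bar>Y x\<bar> / C)) \<partial>M) \<le> 2}"

text \<open>Vectors of R^N are functions nat => real supported in {1..N}.
  Euclidean norm of a vector supported in a finite set I.\<close>
definition enorm_on :: "nat set \<Rightarrow> (nat \<Rightarrow> real) \<Rightarrow> real" where
  "enorm_on I z = sqrt (\<Sum>j\<in>I. (z j)\<^sup>2)"

definition ball_box :: "nat \<Rightarrow> real \<Rightarrow> nat set \<Rightarrow> (nat \<Rightarrow> real) set" where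
  "ball_box N \<alpha> E = {z. (\<forall>j. j \<notin> E \<longrightarrow> z j = 0) \<and> enorm_on {1..N} z \<le> 1 \<and> (\<forall>j. \<bar>z j\<bar> \<le> \<alpha>)}"

definition A_sparse :: "nat \<Rightarrow> (nat \<Rightarrow> 'a \<Rightarrow> real^'n) \<Rightarrow> nat \<Rightarrow> 'a \<Rightarrow> real" where
  "A_sparse N X m \<omega> = Sup {norm (\<Sum>j\<in>{1..N}. z j *\<^sub>R X j \<omega>) | z.
      (\<forall>j. j \<notin> {1..N} \<longrightarrow> z j = 0) \<and> enorm_on {1..N} z = 1 \<and>
      card {j\<in>{1..N}. z j \<noteq> 0} \<le> m}"

end

theory Submission
  imports Defs
begin

lemma psi1_bound:
  assumes Ym: "Y \<in> borel_measurable M" and Yb: "psi1_norm M Y \<le> ereal \<psi>" and psi: "\<psi> > 0"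
  shows "(\<integral>\<^sup>+x. ennreal (exp (\<bar>Y x\<bar>/\<psi>)) \<partial>M) \<le> 2"
proof -
  have A: "(\<integral>\<^sup>+x. ennreal (exp (\<bar>Y x\<bar>/C)) \<partial>M) \<le> 2" if C: "C > \<psi>" for C
  proof -
    have "ereal \<psi> < ereal C" using C by simp
    with Yb have "psi1_norm M Y < ereal C" by (rule order.strict_trans1)
    then obtain s where s: "s \<in> {ereal C | C. C > 0 \<and> (\<integral>\<^sup>+ x. ennreal (exp (\<bar>Y x\<bar> / C)) \<partial>M) \<le> 2}" "s < ereal C"
      unfolding psi1_norm_def by (meson Inf_less_iff)
    then obtain C' where C': "s = ereal C'" "C' > 0" "(\<integral>\<^sup>+ x. ennreal (exp (\<bar>Y x\<bar> / C')) \<partial>M) \<le> 2" by auto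
    have "C' < C" using s(2) C'(1) by simp
    have "(\<integral>\<^sup>+x. ennreal (exp (\<bar>Y x\<bar>/C)) \<partial>M) \<le> (\<integral>\<^sup>+ x. ennreal (exp (\<bar>Y x\<bar> / C')) \<partial>M)"
      apply (rule nn_integral_mono)
      apply (rule ennreal_leI)
      apply (subst exp_le_cancel_iff)
      apply (rule divide_left_mono)
      using \<open>C' < C\<close> C'(2) by auto
    then show ?thesis using C'(3) by simp
  qed
  define f where "f n x = ennreal (exp (\<bar>Y x\<bar>/(\<psi> + 1/Suc n)))" for n x
  have inc: "incseq f"
    unfolding incseq_def le_fun_def f_def
    apply (intro allI impI ennreal_leI)
    apply (subst exp_le_cancel_iff)
    apply (rule divide_left_mono)
    using psi by (auto simp: frac_le intro!: mult_pos_pos add_pos_pos)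
  have fm: "f n \<in> borel_measurable M" for n unfolding f_def using Ym by measurable
  have t: "(\<lambda>n. \<psi> + 1 / real (Suc n)) \<longlonglongrightarrow> \<psi>"
    using LIMSEQ_inverse_real_of_nat_add[of \<psi>] by (simp add: inverse_eq_divide)
  have lim: "(SUP n. f n x) = ennreal (exp (\<bar>Y x\<bar>/\<psi>))" for x
  proof -
    have "(\<lambda>n. f n x) \<longlonglongrightarrow> (SUP n. f n x)"
      using inc by (intro LIMSEQ_SUP) (auto simp: incseq_def le_fun_def)
    moreover have "(\<lambda>n. f n x) \<longlonglongrightarrow> ennreal (exp (\<bar>Y x\<bar>/\<psi>))"
      unfolding f_def by (intro tendsto_ennrealI tendsto_intros t) (use psi in auto)
    ultimately show ?thesis using LIMSEQ_unique by blast
  qed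
  have "(\<integral>\<^sup>+x. ennreal (exp (\<bar>Y x\<bar>/\<psi>)) \<partial>M) = (\<integral>\<^sup>+x. (SUP n. f n x) \<partial>M)" by (simp add: lim)
  also have "\<dots> = (SUP n. integral\<^sup>N M (f n))" by (rule nn_integral_monotone_convergence_SUP[OF inc fm])
  also have "\<dots> \<le> 2" unfolding f_def using psi by (intro SUP_least A) (simp add: add_pos_pos)
  finally show ?thesis .
qed

lemma int_bound:
  fixes X :: "nat \<Rightarrow> 'a \<Rightarrow> 'b::euclidean_space"
  assumes P: "prob_space M"
   and meas: "\<And>i. i \<in> {1..N} \<Longrightarrow> X i \<in> borel_measurable M"
   and indep: "prob_space.indep_vars M (\<lambda>_. borel) X {1..N}"
   and psi: "\<psi> > 0"
   and kb: "\<And>i y. i \<in> E \<Longrightarrow> (\<integral>\<^sup>+\<omega>. ennreal (exp (\<bar>(z i *\<^sub>R X i \<omega>) \<bullet> y\<bar> / (\<psi>*\<alpha>*norm y))) \<partial>M) \<le> 2"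
   and F: "F \<subseteq> {1..N}" "E \<subseteq> F"
  shows "(\<integral>\<^sup>+\<omega>. (\<Prod>i\<in>E. ennreal (exp (\<bar>(z i *\<^sub>R X i \<omega>) \<bullet> (\<Sum>j\<in>F-E. z j *\<^sub>R X j \<omega>)\<bar> / (\<psi>*\<alpha>*norm(\<Sum>j\<in>F-E. z j *\<^sub>R X j \<omega>))))) \<partial>M) \<le> 2 ^ card E"
proof -
  interpret prob_space M by fact
  define kf where "kf i u y = ennreal (exp (\<bar>(z i *\<^sub>R u) \<bullet> y\<bar> / (\<psi>*\<alpha>*norm y)))" for i u and y :: 'b
  define Yf where "Yf x = (\<Sum>j\<in>F-E. z j *\<^sub>R x j)" for x :: "nat \<Rightarrow> 'b"
  define g where "g x = (\<Prod>i\<in>E. kf i (x i) (Yf x))" for x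
  define D where "D = F - E"
  define X' where "X' i = (if i \<in> {1..N} then X i else (\<lambda>_. 0))" for i
  define Pm where "Pm i = distr M borel (X' i)" for i
  have X'm[measurable]: "X' i \<in> borel_measurable M" for i using meas unfolding X'_def by auto
  have finF: "finite F" using F finite_subset by blast
  have LHS: "(\<integral>\<^sup>+\<omega>. (\<Prod>i\<in>E. ennreal (exp (\<bar>(z i *\<^sub>R X i \<omega>) \<bullet> (\<Sum>j\<in>F-E. z j *\<^sub>R X j \<omega>)\<bar> / (\<psi>*\<alpha>*norm(\<Sum>j\<in>F-E. z j *\<^sub>R X j \<omega>))))) \<partial>M)
     = (\<integral>\<^sup>+\<omega>. g (\<lambda>i\<in>F. X' i \<omega>) \<partial>M)"
  proof -
    have rX: "(\<lambda>i\<in>F. X' i \<omega>) j = X j \<omega>" if "j \<in> F" for j \<omega> using that F by (auto simp: X'_def)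
    have rY: "Yf (\<lambda>i\<in>F. X' i \<omega>) = (\<Sum>j\<in>F-E. z j *\<^sub>R X j \<omega>)" for \<omega>
      unfolding Yf_def by (intro sum.cong refl) (use rX in auto)
    show ?thesis unfolding g_def rY kf_def
      by (intro nn_integral_cong prod.cong refl) (use F rX in auto)
  qed
  show ?thesis
  proof (cases "F = {}")
    case True
    then show ?thesis using F LHS by (simp add: g_def emeasure_space_1)
  next
    case Fne: False
    have indep': "indep_vars (\<lambda>_. borel) X' F"
      using indep_vars_subset[OF indep F(1)]
      by (rule indep_vars_cong[THEN iffD1, rotated 3]) (use F in \<open>auto simp: X'_def\<close>)
    have dist: "distr M (\<Pi>\<^sub>M i\<in>F. borel) (\<lambda>x. \<lambda>i\<in>F. X' i x) = (\<Pi>\<^sub>M i\<in>F. Pm i)"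
      unfolding Pm_def using indep_vars_iff_distr_eq_PiM'[OF Fne, where M'="\<lambda>_. borel" and X=X'] indep' by simp
    interpret Pm: prob_space "Pm i" for i unfolding Pm_def by (rule prob_space_distr) simp
    interpret product_prob_space Pm UNIV ..
    have Ym[measurable]: "Yf \<in> borel_measurable (\<Pi>\<^sub>M i\<in>F. borel)"
      unfolding Yf_def
      by (intro borel_measurable_sum borel_measurable_scaleR borel_measurable_const measurable_component_singleton) auto
    have gm: "g \<in> borel_measurable (\<Pi>\<^sub>M i\<in>F. borel)"
      unfolding g_def kf_def
      apply measurable
      using F by auto
    have finE: "finite E" "finite D" using finF F(2) unfolding D_def by (auto intro: finite_subset)
    have FDE: "F = D \<union> E" "D \<inter> E = {}" using F(2) unfolding D_def by auto
    have setsPm: "sets (Pm i) = sets borel" for i unfolding Pm_def by simp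
    have gm': "g \<in> borel_measurable (\<Pi>\<^sub>M i\<in>D \<union> E. Pm i)"
      using gm FDE(1) by (simp add: measurable_cong_sets[OF sets_PiM_cong[OF refl setsPm] refl])
    have kfm: "(\<lambda>u. kf i u y) \<in> borel_measurable (Pm i)" for i y
      unfolding kf_def by (simp add: measurable_cong_sets[OF setsPm refl])
    have kfb: "(\<integral>\<^sup>+u. kf i u y \<partial>Pm i) \<le> 2" if "i \<in> E" for i y
    proof -
      have "(\<integral>\<^sup>+u. kf i u y \<partial>Pm i) = (\<integral>\<^sup>+\<omega>. kf i (X' i \<omega>) y \<partial>M)"
        unfolding Pm_def by (subst nn_integral_distr) (auto simp: kf_def)
      also have "\<dots> = (\<integral>\<^sup>+\<omega>. ennreal (exp (\<bar>(z i *\<^sub>R X i \<omega>) \<bullet> y\<bar> / (\<psi>*\<alpha>*norm y))) \<partial>M)"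
        using that F by (simp add: kf_def X'_def subset_iff)
      also have "\<dots> \<le> 2" using kb that by blast
      finally show ?thesis .
    qed
    have inner: "(\<integral>\<^sup>+y. g (merge D E (x, y)) \<partial>(\<Pi>\<^sub>M i\<in>E. Pm i)) \<le> 2 ^ card E"
      if x: "x \<in> space (\<Pi>\<^sub>M i\<in>D. Pm i)" for x
    proof -
      have "(\<integral>\<^sup>+y. g (merge D E (x, y)) \<partial>(\<Pi>\<^sub>M i\<in>E. Pm i)) = (\<integral>\<^sup>+y. (\<Prod>i\<in>E. kf i (y i) (Yf x)) \<partial>(\<Pi>\<^sub>M i\<in>E. Pm i))"
      proof (intro nn_integral_cong)
        fix y
        have "Yf (merge D E (x, y)) = Yf x" unfolding Yf_def D_def[symmetric]
          by (intro sum.cong refl) (simp add: merge_def)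
        moreover have "merge D E (x, y) i = y i" if "i \<in> E" for i using that FDE(2) by (auto simp: merge_def)
        ultimately show "g (merge D E (x, y)) = (\<Prod>i\<in>E. kf i (y i) (Yf x))"
          unfolding g_def by (intro prod.cong refl) auto
      qed
      also have "\<dots> = (\<Prod>i\<in>E. \<integral>\<^sup>+u. kf i u (Yf x) \<partial>Pm i)"
        by (rule product_nn_integral_prod[OF finE(1) kfm])
      also have "\<dots> \<le> (\<Prod>i\<in>E. 2)"
        by (intro prod_mono_ennreal) (simp add: kfb)
      also have "\<dots> = 2 ^ card E" by simp
      finally show ?thesis .
    qed
    have "(\<integral>\<^sup>+\<omega>. g (\<lambda>i\<in>F. X' i \<omega>) \<partial>M) = (\<integral>\<^sup>+x. g x \<partial>(distr M (\<Pi>\<^sub>M i\<in>F. borel) (\<lambda>\<omega>. \<lambda>i\<in>F. X' i \<omega>)))"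
      using gm by (subst nn_integral_distr) auto
    also have "\<dots> = (\<integral>\<^sup>+x. g x \<partial>(\<Pi>\<^sub>M i\<in>D \<union> E. Pm i))" using dist FDE(1) by simp
    also have "\<dots> = (\<integral>\<^sup>+x. (\<integral>\<^sup>+y. g (merge D E (x, y)) \<partial>(\<Pi>\<^sub>M i\<in>E. Pm i)) \<partial>(\<Pi>\<^sub>M i\<in>D. Pm i))"
      by (rule product_nn_integral_fold[OF FDE(2) finE(2) finE(1) gm'])
    also have "\<dots> \<le> (\<integral>\<^sup>+x. 2 ^ card E \<partial>(\<Pi>\<^sub>M i\<in>D. Pm i))"
      by (intro nn_integral_mono inner)
    also have "\<dots> = 2 ^ card E"
    proof -
      interpret PD: prob_space "\<Pi>\<^sub>M i\<in>D. Pm i" by (rule prob_space_PiM) (rule Pm.prob_space_axioms)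
      show ?thesis by (simp add: PD.emeasure_space_1)
    qed
    finally show ?thesis using LHS by simp
  qed
qed

lemma kb_lemma:
  fixes X :: "'a \<Rightarrow> 'b::euclidean_space"
  assumes P: "prob_space M" and Xm: "X \<in> borel_measurable M"
    and bd: "\<And>y. norm y = 1 \<Longrightarrow> psi1_norm M (\<lambda>\<omega>. X \<omega> \<bullet> y) \<le> ereal \<psi>"
    and psi: "\<psi> > 0" and alpha: "\<alpha> > 0" and c: "\<bar>c\<bar> \<le> \<alpha>"
  shows "(\<integral>\<^sup>+\<omega>. ennreal (exp (\<bar>(c *\<^sub>R X \<omega>) \<bullet> y\<bar> / (\<psi>*\<alpha>*norm y))) \<partial>M) \<le> 2"
proof (cases "y = 0")
  case True
  interpret prob_space M by fact
  show ?thesis using True by (simp add: emeasure_space_1)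
next
  case False
  define u where "u = y /\<^sub>R norm y"
  have nu: "norm u = 1" using False by (simp add: u_def)
  have "(\<integral>\<^sup>+\<omega>. ennreal (exp (\<bar>(c *\<^sub>R X \<omega>) \<bullet> y\<bar> / (\<psi>*\<alpha>*norm y))) \<partial>M)
      \<le> (\<integral>\<^sup>+\<omega>. ennreal (exp (\<bar>X \<omega> \<bullet> u\<bar> / \<psi>)) \<partial>M)"
  proof (intro nn_integral_mono ennreal_leI, subst exp_le_cancel_iff)
    fix \<omega>
    have ny: "norm y > 0" using False by simp
    have "\<bar>(c *\<^sub>R X \<omega>) \<bullet> y\<bar> / (\<psi>*\<alpha>*norm y) = \<bar>c\<bar> * (\<bar>X \<omega> \<bullet> y\<bar> / (\<psi>*\<alpha>*norm y))"
      by (simp add: abs_mult)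
    also have "\<dots> \<le> \<alpha> * (\<bar>X \<omega> \<bullet> y\<bar> / (\<psi>*\<alpha>*norm y))"
      using c psi alpha ny by (intro mult_right_mono) auto
    also have "\<dots> = \<bar>X \<omega> \<bullet> u\<bar> / \<psi>"
      using alpha ny psi by (simp add: u_def abs_mult field_simps)
    finally show "\<bar>(c *\<^sub>R X \<omega>) \<bullet> y\<bar> / (\<psi>*\<alpha>*norm y) \<le> \<bar>X \<omega> \<bullet> u\<bar> / \<psi>" .
  qed
  also have "\<dots> \<le> 2"
    by (rule psi1_bound[OF _ bd[OF nu] psi]) (use Xm in measurable)
  finally show ?thesis .
qed

lemma event_bound:
  fixes X :: "nat \<Rightarrow> 'a \<Rightarrow> 'b::euclidean_space"
  assumes P: "prob_space M"
   and meas: "\<And>i. i \<in> {1..N} \<Longrightarrow> X i \<in> borel_measurable M"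
   and indep: "prob_space.indep_vars M (\<lambda>_. borel) X {1..N}"
   and psi: "\<psi> > 0"
   and psi_bd: "\<And>i y. i \<in> {1..N} \<Longrightarrow> norm y = 1 \<Longrightarrow> psi1_norm M (\<lambda>\<omega>. X i \<omega> \<bullet> y) \<le> ereal \<psi>"
   and alpha: "\<alpha> > 0" and zb: "\<And>j. \<bar>z j\<bar> \<le> \<alpha>"
   and F: "F \<subseteq> {1..N}" "E \<subseteq> F"
  shows "measure M {\<omega>\<in>space M. (\<Sum>i\<in>E. \<bar>(z i *\<^sub>R X i \<omega>) \<bullet> (\<Sum>j\<in>F-E. z j *\<^sub>R X j \<omega>)\<bar>)
            > \<psi>*\<alpha>*L*norm(\<Sum>j\<in>F-E. z j *\<^sub>R X j \<omega>)} \<le> 2^card E * exp(-L)"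
proof -
  interpret prob_space M by fact
  define Y where "Y \<omega> = (\<Sum>j\<in>F-E. z j *\<^sub>R X j \<omega>)" for \<omega>
  define G where "G \<omega> = (\<Prod>i\<in>E. ennreal (exp (\<bar>(z i *\<^sub>R X i \<omega>) \<bullet> Y \<omega>\<bar> / (\<psi>*\<alpha>*norm (Y \<omega>)))))" for \<omega>
  have finE: "finite E" using F finite_subset by (metis finite_atLeastAtMost)
  have [measurable]: "X i \<in> borel_measurable M" if "i \<in> F" for i using that F meas by auto
  have Ym[measurable]: "Y \<in> borel_measurable M" unfolding Y_def
    by (intro borel_measurable_sum borel_measurable_scaleR borel_measurable_const) (use F meas in auto)
  have Gm: "G \<in> borel_measurable M" unfolding G_def
    apply measurable using F by auto
  have Gint: "(\<integral>\<^sup>+\<omega>. G \<omega> \<partial>M) \<le> 2 ^ card E"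
    unfolding G_def Y_def
  proof (rule int_bound[OF P meas indep psi _ F])
    fix i y assume "i \<in> E"
    then have i: "i \<in> {1..N}" using F by auto
    show "(\<integral>\<^sup>+\<omega>. ennreal (exp (\<bar>(z i *\<^sub>R X i \<omega>) \<bullet> y\<bar> / (\<psi>*\<alpha>*norm y))) \<partial>M) \<le> 2"
      by (rule kb_lemma[OF P meas[OF i] psi_bd[OF i] psi alpha zb])
  qed
  let ?B = "{\<omega>\<in>space M. (\<Sum>i\<in>E. \<bar>(z i *\<^sub>R X i \<omega>) \<bullet> (\<Sum>j\<in>F-E. z j *\<^sub>R X j \<omega>)\<bar>)
            > \<psi>*\<alpha>*L*norm(\<Sum>j\<in>F-E. z j *\<^sub>R X j \<omega>)}"
  let ?C = "{\<omega>\<in>space M. 1 \<le> ennreal (exp (-L)) * G \<omega>}"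
  have sub: "?B \<subseteq> ?C"
  proof
    fix \<omega> assume "\<omega> \<in> ?B"
    then have \<omega>: "\<omega> \<in> space M" and S: "(\<Sum>i\<in>E. \<bar>(z i *\<^sub>R X i \<omega>) \<bullet> Y \<omega>\<bar>) > \<psi>*\<alpha>*L*norm (Y \<omega>)"
      unfolding Y_def by auto
    have Y0: "Y \<omega> \<noteq> 0" using S by (auto simp: mult.commute)
    have pos: "\<psi>*\<alpha>*norm (Y \<omega>) > 0" using Y0 psi alpha by simp
    define s where "s = (\<Sum>i\<in>E. \<bar>(z i *\<^sub>R X i \<omega>) \<bullet> Y \<omega>\<bar>) / (\<psi>*\<alpha>*norm (Y \<omega>))"
    have sL: "s > L" unfolding s_def using S pos by (simp add: pos_less_divide_eq mult.commute mult.left_commute)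
    have "G \<omega> = ennreal (exp s)"
      unfolding G_def s_def
      by (simp add: prod_ennreal exp_sum[OF finE] sum_divide_distrib)
    then have "ennreal (exp (-L)) * G \<omega> = ennreal (exp (s - L))"
      by (simp add: ennreal_mult[symmetric] exp_diff exp_minus field_simps)
    moreover have "exp (s - L) \<ge> 1" using sL by simp
    ultimately show "\<omega> \<in> ?C" using \<omega> by simp
  qed
  have Cm: "?C \<in> sets M" using Gm by measurable
  have "emeasure M ?C \<le> ennreal (exp (-L)) * (\<integral>\<^sup>+ x. G x * indicator (space M) x \<partial>M)"
    by (rule nn_integral_Markov_inequality) (use Gm in auto)
  also have "(\<integral>\<^sup>+ x. G x * indicator (space M) x \<partial>M) = (\<integral>\<^sup>+ x. G x \<partial>M)"
    by (intro nn_integral_cong) auto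
  also have "ennreal (exp (-L)) * \<dots> \<le> ennreal (exp (-L)) * 2 ^ card E"
    by (intro mult_left_mono Gint) auto
  also have "\<dots> = ennreal (2^card E * exp(-L))"
  proof -
    have "(2::ennreal)^card E = ennreal (2^card E)" by (metis ennreal_numeral ennreal_power zero_le_numeral)
    then show ?thesis by (simp add: ennreal_mult[symmetric] mult.commute)
  qed
  finally have "emeasure M ?B \<le> ennreal (2^card E * exp(-L))"
    using emeasure_mono[OF sub Cm] by (meson order_trans)
  then show ?thesis unfolding measure_def by (intro enn2real_leI) auto
qed

lemma sum_pow_subsets:
  fixes x :: real
  assumes "finite A"
  shows "(\<Sum>E\<in>Pow A. x ^ card E) = (1 + x) ^ card A"
  using assms
proof (induction A rule: finite_induct)
  case empty
  then show ?case by simp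
next
  case (insert a A)
  have "Pow (insert a A) = Pow A \<union> insert a ` Pow A" by (rule Pow_insert)
  moreover have "Pow A \<inter> insert a ` Pow A = {}" using insert by auto
  moreover have "inj_on (insert a) (Pow A)" using insert by (auto simp: inj_on_def)
  ultimately have "(\<Sum>E\<in>Pow (insert a A). x ^ card E) = (\<Sum>E\<in>Pow A. x ^ card E) + (\<Sum>E\<in>Pow A. x ^ card (insert a E))"
    using insert by (simp add: sum.union_disjoint sum.reindex)
  also have "(\<Sum>E\<in>Pow A. x ^ card (insert a E)) = (\<Sum>E\<in>Pow A. x * x ^ card E)"
  proof (intro sum.cong refl)
    fix E assume "E \<in> Pow A"
    then have "a \<notin> E" "finite E" using insert by (auto intro: finite_subset)
    then show "x ^ card (insert a E) = x * x ^ card E" by simp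
  qed
  also have "(\<Sum>E\<in>Pow A. x ^ card E) + \<dots> = (1 + x) * (\<Sum>E\<in>Pow A. x ^ card E)"
    by (simp add: sum_distrib_left[symmetric] sum.distrib[symmetric] distrib_right)
  finally show ?case using insert by simp
qed

lemma card_small_subsets:
  assumes m: "1 \<le> m" "m \<le> N"
  shows "real (card {F. F \<subseteq> {1..N} \<and> card F \<le> m}) \<le> (exp 1 * real N / real m) ^ m"
proof -
  define Fs where "Fs = {F. F \<subseteq> {1..(N::nat)} \<and> card F \<le> m}"
  define x where "x = real m / real N"
  have x: "0 < x" "x \<le> 1" using m by (auto simp: x_def)
  have Fs_sub: "Fs \<subseteq> Pow {1..N}" unfolding Fs_def by auto
  have finFs: "finite Fs" using Fs_sub finite_subset by blast
  have "real (card Fs) = (\<Sum>F\<in>Fs. 1)" by simp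
  also have "\<dots> \<le> (\<Sum>F\<in>Fs. (1/x)^m * x ^ card F)"
  proof (intro sum_mono)
    fix F assume "F \<in> Fs"
    then have "card F \<le> m" unfolding Fs_def by auto
    then have "x ^ m \<le> x ^ card F" using x by (intro power_decreasing) auto
    then show "1 \<le> (1/x)^m * x ^ card F" using x by (simp add: power_divide field_simps)
  qed
  also have "\<dots> \<le> (\<Sum>F\<in>Pow {1..N}. (1/x)^m * x ^ card F)"
    using Fs_sub x by (intro sum_mono2) auto
  also have "\<dots> = (1/x)^m * (1 + x) ^ N"
    by (simp add: sum_distrib_left[symmetric] sum_pow_subsets)
  also have "\<dots> \<le> (1/x)^m * exp x ^ N"
  proof -
    have "1 + x \<le> exp x" by (rule exp_ge_add_one_self)
    then have "(1+x)^N \<le> exp x ^N" by (rule power_mono) (use x in auto)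
    then show ?thesis by (rule mult_left_mono) (use x in simp)
  qed
  also have "exp x ^ N = exp 1 ^ m"
  proof -
    have "exp x ^ N = exp (real N * x)" by (simp add: exp_of_nat_mult)
    also have "real N * x = real m" using m by (simp add: x_def)
    also have "exp (real m) = exp 1 ^ m" by (metis exp_of_nat_mult mult.right_neutral)
    finally show ?thesis .
  qed
  also have "(1/x)^m * exp 1 ^ m = (exp 1 * real N / real m) ^ m"
  proof -
    have "1/x * exp 1 = exp 1 * real N / real m" using m by (simp add: x_def)
    then show ?thesis by (metis power_mult_distrib)
  qed
  finally show ?thesis unfolding Fs_def .
qed

lemma A_sparse_ge:
  fixes X :: "nat \<Rightarrow> 'a \<Rightarrow> real^'n::finite"
  assumes m: "1 \<le> m" "m \<le> N"
   and w0: "\<And>j. j \<notin> {1..N} \<Longrightarrow> w j = 0" and w1: "enorm_on {1..N} w \<le> 1"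
   and wc: "card {j\<in>{1..N}. w j \<noteq> 0} \<le> m"
  shows "norm (\<Sum>j\<in>{1..N}. w j *\<^sub>R X j \<omega>) \<le> A_sparse N X m \<omega>"
proof -
  define T where "T = {norm (\<Sum>j\<in>{1..N}. z j *\<^sub>R X j \<omega>) | z.
      (\<forall>j. j \<notin> {1..N} \<longrightarrow> z j = 0) \<and> enorm_on {1..N} z = 1 \<and>
      card {j\<in>{1..N}. z j \<noteq> 0} \<le> m}"
  have A: "A_sparse N X m \<omega> = Sup T" unfolding A_sparse_def T_def ..
  have bdd: "bdd_above T"
  proof (rule bdd_aboveI)
    fix t assume "t \<in> T"
    then obtain z where t: "t = norm (\<Sum>j\<in>{1..N}. z j *\<^sub>R X j \<omega>)" and z1: "enorm_on {1..N} z = 1"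
      unfolding T_def by blast
    have zj: "\<bar>z j\<bar> \<le> 1" if "j \<in> {1..N}" for j
    proof -
      have "(z j)^2 \<le> (\<Sum>i\<in>{1..N}. (z i)^2)"
        using that by (intro member_le_sum) auto
      also have "\<dots> = 1" using z1 unfolding enorm_on_def
        by (metis real_sqrt_eq_1_iff)
      finally show ?thesis by (simp add: abs_square_le_1)
    qed
    have "t \<le> (\<Sum>j\<in>{1..N}. norm (z j *\<^sub>R X j \<omega>))" unfolding t by (rule norm_sum)
    also have "\<dots> \<le> (\<Sum>j\<in>{1..N}. norm (X j \<omega>))"
      using zj by (intro sum_mono) (auto intro!: mult_left_le_one_le)
    finally show "t \<le> (\<Sum>j\<in>{1..N}. norm (X j \<omega>))" .
  qed
  define e where "e j = (if j = 1 then 1 else (0::real))" for j :: nat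
  have "norm (\<Sum>j\<in>{1..N}. e j *\<^sub>R X j \<omega>) \<in> T"
  proof -
    have "{j\<in>{1..N}. e j \<noteq> 0} = {1}" using m by (auto simp: e_def)
    moreover have "enorm_on {1..N} e = 1"
    proof -
      have "(\<Sum>j\<in>{1..N}. (e j)^2) = (\<Sum>j\<in>{1..N}. if j = 1 then 1 else 0)"
        by (intro sum.cong) (auto simp: e_def)
      also have "\<dots> = 1" using m by simp
      finally show ?thesis unfolding enorm_on_def by simp
    qed
    moreover have "\<forall>j. j \<notin> {1..N} \<longrightarrow> e j = 0" using m by (auto simp: e_def)
    ultimately show ?thesis unfolding T_def using m by (intro CollectI exI[of _ e]) auto
  qed
  then have Tne: "T \<noteq> {}" by blast
  have A0: "0 \<le> A_sparse N X m \<omega>"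
    unfolding A using \<open>_ \<in> T\<close> bdd by (meson cSup_upper norm_ge_zero order_trans)
  define r where "r = enorm_on {1..N} w"
  show ?thesis
  proof (cases "r = 0")
    case True
    then have "(\<Sum>j\<in>{1..N}. (w j)^2) = 0" unfolding r_def enorm_on_def by simp
    then have "\<forall>j\<in>{1..N}. (w j)^2 = 0" by (subst (asm) sum_nonneg_eq_0_iff) auto
    then have "(\<Sum>j\<in>{1..N}. w j *\<^sub>R X j \<omega>) = 0" by (intro sum.neutral) auto
    then show ?thesis using A0 by simp
  next
    case False
    moreover have "r \<ge> 0" unfolding r_def enorm_on_def by (simp add: sum_nonneg)
    ultimately have r: "r > 0" by simp
    define v where "v j = w j / r" for j
    have "norm (\<Sum>j\<in>{1..N}. v j *\<^sub>R X j \<omega>) \<in> T"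
    proof -
      have "{j\<in>{1..N}. v j \<noteq> 0} = {j\<in>{1..N}. w j \<noteq> 0}" using r by (auto simp: v_def)
      moreover have "enorm_on {1..N} v = 1"
      proof -
        have "(\<Sum>j\<in>{1..N}. (v j)^2) = (\<Sum>j\<in>{1..N}. (w j)^2) / r^2"
          by (simp add: v_def power_divide sum_divide_distrib)
        also have "(\<Sum>j\<in>{1..N}. (w j)^2) = r^2" unfolding r_def enorm_on_def
          by (simp add: sum_nonneg)
        finally show ?thesis using r unfolding enorm_on_def by simp
      qed
      moreover have "\<forall>j. j \<notin> {1..N} \<longrightarrow> v j = 0" using w0 by (simp add: v_def)
      ultimately show ?thesis unfolding T_def using wc by auto
    qed
    then have le: "norm (\<Sum>j\<in>{1..N}. v j *\<^sub>R X j \<omega>) \<le> A_sparse N X m \<omega>"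
      unfolding A using bdd by (rule cSup_upper)
    have "(\<Sum>j\<in>{1..N}. w j *\<^sub>R X j \<omega>) = r *\<^sub>R (\<Sum>j\<in>{1..N}. v j *\<^sub>R X j \<omega>)"
      using r by (simp add: v_def scaleR_sum_right)
    then have "norm (\<Sum>j\<in>{1..N}. w j *\<^sub>R X j \<omega>) = r * norm (\<Sum>j\<in>{1..N}. v j *\<^sub>R X j \<omega>)"
      using r by simp
    also have "\<dots> \<le> 1 * A_sparse N X m \<omega>"
      using le r w1 A0 unfolding r_def by (intro mult_mono) auto
    finally show ?thesis by simp
  qed
qed

theorem mainTheorem3:
  fixes M :: "'a measure" and X :: "nat \<Rightarrow> 'a \<Rightarrow> real^'n::finite"
    and N m :: nat and \<psi> \<epsilon> \<alpha> L :: real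
    and Net :: "nat set \<Rightarrow> (nat \<Rightarrow> real) set"
  assumes "prob_space M"
    and meas: "\<And>i. i \<in> {1..N} \<Longrightarrow> X i \<in> borel_measurable M"
    and indep: "prob_space.indep_vars M (\<lambda>_. borel) X {1..N}"
    and psi_pos: "\<psi> > 0"
    and psi_bd: "\<And>i y. i \<in> {1..N} \<Longrightarrow> norm y = 1 \<Longrightarrow>
                   psi1_norm M (\<lambda>\<omega>. X i \<omega> \<bullet> y) \<le> ereal \<psi>"
    and m: "1 \<le> m" "m \<le> N"
    and eps: "0 < \<epsilon>" "\<epsilon> \<le> 1"
    and alpha: "0 < \<alpha>" "\<alpha> \<le> 1"
    and L: "L \<ge> 2 * real m * ln (12 * exp 1 * real N / (real m * \<epsilon>))"
    and net_sub: "\<And>E. E \<subseteq> {1..N} \<Longrightarrow> Net E \<subseteq> ball_box N \<alpha> E"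
    and net_cover: "\<And>E w. E \<subseteq> {1..N} \<Longrightarrow> w \<in> ball_box N \<alpha> E \<Longrightarrow>
                     \<exists>z\<in>Net E. enorm_on {1..N} (\<lambda>j. w j - z j) \<le> \<epsilon>"
    and net_fin: "\<And>E. E \<subseteq> {1..N} \<Longrightarrow> finite (Net E)"
    and net_card: "\<And>E. E \<subseteq> {1..N} \<Longrightarrow> real (card (Net E)) \<le> (3 / \<epsilon>) ^ card E"
  shows "measure M {\<omega> \<in> space M.
           Sup {\<Sum>i\<in>E. \<bar>(z i *\<^sub>R X i \<omega>) \<bullet> (\<Sum>j\<in>F - E. z j *\<^sub>R X j \<omega>)\<bar> | F E z.
                  F \<subseteq> {1..N} \<and> card F \<le> m \<and> E \<subseteq> F \<and> z \<in> Net F}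
           > \<psi> * \<alpha> * L * A_sparse N X m \<omega>}
         \<le> exp (- L / 2)"
proof -
  interpret prob_space M by fact
  define Fs where "Fs = {F. F \<subseteq> {1..N} \<and> card F \<le> m}"
  define B where "B F E z = {\<omega>\<in>space M. (\<Sum>i\<in>E. \<bar>(z i *\<^sub>R X i \<omega>) \<bullet> (\<Sum>j\<in>F-E. z j *\<^sub>R X j \<omega>)\<bar>)
            > \<psi>*\<alpha>*L*norm(\<Sum>j\<in>F-E. z j *\<^sub>R X j \<omega>)}" for F E z
  have finFs: "finite Fs" unfolding Fs_def by (rule finite_subset[of _ "Pow {1..N}"]) auto
  define K where "K = 12 * exp 1 * real N / (real m * \<epsilon>)"
  have K1: "K \<ge> 1"
  proof -
    have "real m * \<epsilon> \<le> real N * 1" using m eps by (intro mult_mono) auto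
    also have "\<dots> \<le> 12 * exp 1 * real N"
    proof -
      have "1 \<le> 12 * exp (1::real)" using exp_ge_add_one_self[of 1] by simp
      then show ?thesis by (metis mult.commute mult_left_mono of_nat_0_le_iff)
    qed
    finally show ?thesis using m eps unfolding K_def by simp
  qed
  have lnK: "ln K \<ge> 0" using K1 by simp
  have L0: "L \<ge> 0" using L lnK unfolding K_def[symmetric] by (meson of_nat_0_le_iff order_trans mult_nonneg_nonneg zero_le_numeral)
  have zprops: "(\<forall>j. \<bar>z j\<bar> \<le> \<alpha>) \<and> (\<forall>j. j \<notin> F \<longrightarrow> z j = 0) \<and> enorm_on {1..N} z \<le> 1"
    if "z \<in> Net F" "F \<subseteq> {1..N}" for z F
    using net_sub[OF that(2)] that(1) unfolding ball_box_def by auto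
  have Bm: "B F E z \<in> sets M" if "F \<subseteq> {1..N}" "E \<subseteq> F" for F E z
  proof -
    have [measurable]: "X i \<in> borel_measurable M" if "i \<in> F" for i using that \<open>F \<subseteq> _\<close> meas by auto
    have Ym[measurable]: "(\<lambda>\<omega>. \<Sum>j\<in>F-E. z j *\<^sub>R X j \<omega>) \<in> borel_measurable M"
      by (intro borel_measurable_sum borel_measurable_scaleR borel_measurable_const) (use that meas in auto)
    show ?thesis unfolding B_def apply measurable using that by auto
  qed
  define U where "U = (\<Union>F\<in>Fs. \<Union>E\<in>Pow F. \<Union>z\<in>Net F. B F E z)"
  have Um: "U \<in> sets M" unfolding U_def
    using finFs net_fin Bm unfolding Fs_def
    by (intro sets.finite_UN) (auto intro: finite_subset)
  have sub: "{\<omega> \<in> space M.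
           Sup {\<Sum>i\<in>E. \<bar>(z i *\<^sub>R X i \<omega>) \<bullet> (\<Sum>j\<in>F - E. z j *\<^sub>R X j \<omega>)\<bar> | F E z.
                  F \<subseteq> {1..N} \<and> card F \<le> m \<and> E \<subseteq> F \<and> z \<in> Net F}
           > \<psi> * \<alpha> * L * A_sparse N X m \<omega>} \<subseteq> U"
  proof
    fix \<omega> assume "\<omega> \<in> {\<omega> \<in> space M.
           Sup {\<Sum>i\<in>E. \<bar>(z i *\<^sub>R X i \<omega>) \<bullet> (\<Sum>j\<in>F - E. z j *\<^sub>R X j \<omega>)\<bar> | F E z.
                  F \<subseteq> {1..N} \<and> card F \<le> m \<and> E \<subseteq> F \<and> z \<in> Net F}
           > \<psi> * \<alpha> * L * A_sparse N X m \<omega>}"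
    then have \<omega>: "\<omega> \<in> space M" and S: "\<psi> * \<alpha> * L * A_sparse N X m \<omega> < Sup {\<Sum>i\<in>E. \<bar>(z i *\<^sub>R X i \<omega>) \<bullet> (\<Sum>j\<in>F - E. z j *\<^sub>R X j \<omega>)\<bar> | F E z.
                  F \<subseteq> {1..N} \<and> card F \<le> m \<and> E \<subseteq> F \<and> z \<in> Net F}" by auto
    define f where "f F E z = (\<Sum>i\<in>E. \<bar>(z i *\<^sub>R X i \<omega>) \<bullet> (\<Sum>j\<in>F - E. z j *\<^sub>R X j \<omega>)\<bar>)" for F E z
    define T where "T = {\<Sum>i\<in>E. \<bar>(z i *\<^sub>R X i \<omega>) \<bullet> (\<Sum>j\<in>F - E. z j *\<^sub>R X j \<omega>)\<bar> | F E z.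
                  F \<subseteq> {1..N} \<and> card F \<le> m \<and> E \<subseteq> F \<and> z \<in> Net F}"
    have Tsub: "T \<subseteq> (\<lambda>(F, E, z). f F E z) ` (SIGMA F:Fs. Pow F \<times> Net F)"
    proof
      fix t assume "t \<in> T"
      then obtain F E z where "t = f F E z" "F \<subseteq> {1..N}" "card F \<le> m" "E \<subseteq> F" "z \<in> Net F"
        unfolding T_def f_def by blast
      then show "t \<in> (\<lambda>(F, E, z). f F E z) ` (SIGMA F:Fs. Pow F \<times> Net F)"
        unfolding Fs_def by (intro image_eqI[of _ _ "(F, E, z)"]) auto
    qed
    have "finite (SIGMA F:Fs. Pow F \<times> Net F)"
      using finFs net_fin unfolding Fs_def by (intro finite_SigmaI) (auto intro: finite_subset)
    then have Tfin: "finite T" using Tsub finite_subset by blast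
    obtain z0 where z0: "z0 \<in> Net {}"
    proof -
      have "(\<lambda>_. 0) \<in> ball_box N \<alpha> {}" using alpha unfolding ball_box_def enorm_on_def by simp
      then show ?thesis using net_cover[of "{}" "\<lambda>_. 0"] that by auto
    qed
    have "f {} {} z0 \<in> T" unfolding T_def f_def using z0 by force
    then have Tne: "T \<noteq> {}" by blast
    obtain t where "t \<in> T" "\<psi> * \<alpha> * L * A_sparse N X m \<omega> < t"
      using S less_cSup_iff[OF Tne bdd_above_finite[OF Tfin]] unfolding T_def by blast
    then obtain F E z where FEz: "F \<subseteq> {1..N}" "card F \<le> m" "E \<subseteq> F" "z \<in> Net F"
      and St: "\<psi> * \<alpha> * L * A_sparse N X m \<omega> < f F E z"
      unfolding T_def f_def by blast
    define w where "w j = (if j \<in> F - E then z j else 0)" for j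
    have zp: "(\<forall>j. \<bar>z j\<bar> \<le> \<alpha>) \<and> (\<forall>j. j \<notin> F \<longrightarrow> z j = 0) \<and> enorm_on {1..N} z \<le> 1"
      by (rule zprops[OF FEz(4,1)])
    have finF: "finite F" using FEz(1) finite_subset by blast
    have sumw: "(\<Sum>j\<in>{1..N}. w j *\<^sub>R X j \<omega>) = (\<Sum>j\<in>F-E. z j *\<^sub>R X j \<omega>)"
    proof -
      have "(\<Sum>j\<in>{1..N}. w j *\<^sub>R X j \<omega>) = (\<Sum>j\<in>F-E. w j *\<^sub>R X j \<omega>)"
        using FEz(1) by (intro sum.mono_neutral_right) (auto simp: w_def)
      also have "\<dots> = (\<Sum>j\<in>F-E. z j *\<^sub>R X j \<omega>)" by (intro sum.cong) (auto simp: w_def)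
      finally show ?thesis .
    qed
    have "norm (\<Sum>j\<in>{1..N}. w j *\<^sub>R X j \<omega>) \<le> A_sparse N X m \<omega>"
    proof (rule A_sparse_ge[OF m])
      show "w j = 0" if "j \<notin> {1..N}" for j using that FEz(1) by (auto simp: w_def)
      have "enorm_on {1..N} w \<le> enorm_on {1..N} z"
        unfolding enorm_on_def by (intro real_sqrt_le_mono sum_mono) (auto simp: w_def)
      then show "enorm_on {1..N} w \<le> 1" using zp by linarith
      have "card {j\<in>{1..N}. w j \<noteq> 0} \<le> card F"
        using finF by (intro card_mono) (auto simp: w_def)
      then show "card {j\<in>{1..N}. w j \<noteq> 0} \<le> m" using FEz(2) by linarith
    qed
    then have "\<psi> * \<alpha> * L * norm (\<Sum>j\<in>F-E. z j *\<^sub>R X j \<omega>) \<le> \<psi> * \<alpha> * L * A_sparse N X m \<omega>"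
      unfolding sumw using psi_pos alpha L0 by (intro mult_left_mono) auto
    then have "\<omega> \<in> B F E z" unfolding B_def using \<omega> St unfolding f_def by auto
    then show "\<omega> \<in> U" unfolding U_def Fs_def using FEz by blast
  qed
  have FsD: "F \<subseteq> {1..N}" "finite F" if "F \<in> Fs" for F
    using that unfolding Fs_def by (auto intro: finite_subset)
  have mU: "measure M U \<le> (\<Sum>F\<in>Fs. \<Sum>E\<in>Pow F. \<Sum>z\<in>Net F. 2 ^ card E * exp (- L))"
  proof -
    have "measure M U \<le> (\<Sum>F\<in>Fs. measure M (\<Union>E\<in>Pow F. \<Union>z\<in>Net F. B F E z))"
      unfolding U_def using Bm net_fin FsD by (intro measure_UNION_le finFs sets.finite_UN) auto
    also have "\<dots> \<le> (\<Sum>F\<in>Fs. \<Sum>E\<in>Pow F. measure M (\<Union>z\<in>Net F. B F E z))"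
      using Bm net_fin FsD by (intro sum_mono measure_UNION_le sets.finite_UN) auto
    also have "\<dots> \<le> (\<Sum>F\<in>Fs. \<Sum>E\<in>Pow F. \<Sum>z\<in>Net F. measure M (B F E z))"
      using Bm net_fin FsD by (intro sum_mono measure_UNION_le) auto
    also have "\<dots> \<le> (\<Sum>F\<in>Fs. \<Sum>E\<in>Pow F. \<Sum>z\<in>Net F. 2 ^ card E * exp (- L))"
    proof (intro sum_mono)
      fix F E z assume "F \<in> Fs" "E \<in> Pow F" "z \<in> Net F"
      then have F: "F \<subseteq> {1..N}" "E \<subseteq> F" using FsD by auto
      have zb: "\<bar>z j\<bar> \<le> \<alpha>" for j using zprops[OF \<open>z \<in> Net F\<close> F(1)] by blast
      show "measure M (B F E z) \<le> 2 ^ card E * exp (- L)"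
        unfolding B_def by (rule event_bound[OF \<open>prob_space M\<close> meas indep psi_pos psi_bd alpha(1) zb F])
    qed
    finally show ?thesis .
  qed
  have cnt: "(\<Sum>F\<in>Fs. \<Sum>E\<in>Pow F. \<Sum>z\<in>Net F. 2 ^ card E * exp (- L)) \<le> exp (- L / 2)"
  proof -
    have eq: "(\<Sum>E\<in>Pow F. \<Sum>z\<in>Net F. 2 ^ card E * exp (- L)) = real (card (Net F)) * 3 ^ card F * exp (- L)"
      if "F \<in> Fs" for F
    proof -
      have "(\<Sum>E\<in>Pow F. \<Sum>z\<in>Net F. 2 ^ card E * exp (- L)) = (\<Sum>E\<in>Pow F. (real (card (Net F)) * exp (- L)) * 2 ^ card E)"
        by (simp add: mult_ac)
      also have "\<dots> = (real (card (Net F)) * exp (- L)) * (\<Sum>E\<in>Pow F. 2 ^ card E)"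
        by (simp add: sum_distrib_left)
      also have "(\<Sum>E\<in>Pow F. (2::real) ^ card E) = 3 ^ card F"
        using sum_pow_subsets[OF FsD(2)[OF that], of 2] by simp
      finally show ?thesis by (simp add: mult_ac)
    qed
    have "(\<Sum>F\<in>Fs. \<Sum>E\<in>Pow F. \<Sum>z\<in>Net F. 2 ^ card E * exp (- L)) = (\<Sum>F\<in>Fs. real (card (Net F)) * 3 ^ card F * exp (- L))"
      using eq by (rule sum.cong[OF refl])
    also have "\<dots> \<le> (\<Sum>F\<in>Fs. (3 / \<epsilon>) ^ card F * 3 ^ card F * exp (- L))"
      using net_card FsD by (intro sum_mono mult_right_mono) auto
    also have "\<dots> = (\<Sum>F\<in>Fs. (9 / \<epsilon>) ^ card F * exp (- L))"
      by (intro sum.cong refl) (simp add: power_mult_distrib[symmetric])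
    also have "\<dots> \<le> (\<Sum>F\<in>Fs. (9 / \<epsilon>) ^ m * exp (- L))"
    proof (intro sum_mono mult_right_mono)
      fix F assume "F \<in> Fs"
      then have "card F \<le> m" unfolding Fs_def by auto
      moreover have "1 \<le> 9 / \<epsilon>" using eps by simp
      ultimately show "(9 / \<epsilon>) ^ card F \<le> (9 / \<epsilon>) ^ m" by (rule power_increasing)
    qed auto
    also have "\<dots> = real (card Fs) * ((9 / \<epsilon>) ^ m * exp (- L))" by simp
    also have "\<dots> \<le> (exp 1 * real N / real m) ^ m * ((9 / \<epsilon>) ^ m * exp (- L))"
      using card_small_subsets[OF m] unfolding Fs_def using eps by (intro mult_right_mono) auto
    also have "\<dots> = (9 * exp 1 * real N / (real m * \<epsilon>)) ^ m * exp (- L)"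
      by (simp add: power_mult_distrib[symmetric] mult_ac)
    also have "\<dots> \<le> K ^ m * exp (- L)"
      unfolding K_def using m eps by (intro mult_right_mono power_mono divide_right_mono) auto
    also have "K ^ m = exp (real m * ln K)"
      using K1 by (simp add: exp_of_nat_mult)
    also have "exp (real m * ln K) * exp (- L) \<le> exp (L / 2) * exp (- L)"
      using L unfolding K_def[symmetric] by simp
    also have "\<dots> = exp (- L / 2)" by (simp add: exp_add[symmetric])
    finally show ?thesis .
  qed
  have "measure M {\<omega> \<in> space M.
           Sup {\<Sum>i\<in>E. \<bar>(z i *\<^sub>R X i \<omega>) \<bullet> (\<Sum>j\<in>F - E. z j *\<^sub>R X j \<omega>)\<bar> | F E z.
                  F \<subseteq> {1..N} \<and> card F \<le> m \<and> E \<subseteq> F \<and> z \<in> Net F}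
           > \<psi> * \<alpha> * L * A_sparse N X m \<omega>} \<le> measure M U" using sub Um by (rule finite_measure_mono)
  then show ?thesis using mU cnt by linarith
qed

end
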